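(* Let $d\ge1$ and $L\ge2$ be integers, $\alpha\ge0$, $\delta\ge 0$, and let $W_1,\dots,W_{L-1}\in\mathbb{R}^{d\times d}$ satisfy $\|W_l\|_2\le\alpha$ for $l=1,\dots,L-1$ and $\|W_{l+1}^\intercal W_{l+1}-W_lW_l^\intercal\|_2\le\delta$ for $l=1,\dots,L-2$. Then $$\left\|W_{L-1:1}W_{L-1:1}^\intercal-\left(W_{L-1}W_{L-1}^\intercal\right)^{L-1}\right\|_2\le\frac12L^2\alpha^{2(L-2)}\delta.$$
   Context: $W_{L-1:1}=W_{L-1}W_{L-2}\cdots W_1$. $\|\cdot\|_2$ denotes the spectral (operator $\ell_2$) norm of a matrix. *)

theory Defs
  imports "HOL-Analysis.Analysis"
begin

definition spec_norm :: "real^'n^'n \<Rightarrow> real" where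
  "spec_norm A = onorm (\<lambda>x. A *v x)"

fun mprod :: "(nat \<Rightarrow> real^'n^'n) \<Rightarrow> nat \<Rightarrow> real^'n^'n" where
  "mprod W 0 = mat 1"
| "mprod W (Suc k) = W (Suc k) ** mprod W k"

fun mpow :: "real^'n^'n \<Rightarrow> nat \<Rightarrow> real^'n^'n" where
  "mpow A 0 = mat 1"
| "mpow A (Suc k) = A ** mpow A k"

end

theory Submission
  imports Defs
begin

lemma sn_bl: "bounded_linear (\<lambda>x. (A::real^'n^'n) *v x)"
  by simp

lemma sn_app: "norm (A *v x) \<le> spec_norm A * norm x"
  unfolding spec_norm_def using onorm[OF sn_bl] by blast

lemma sn_nonneg: "0 \<le> spec_norm A"
  unfolding spec_norm_def by (rule onorm_pos_le[OF sn_bl])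

lemma sn_le: assumes "0 \<le> b" "\<And>x. norm (A *v x) \<le> b * norm x" shows "spec_norm A \<le> b"
  unfolding spec_norm_def by (rule onorm_bound[OF assms])

lemma sn_mult: "spec_norm (A ** B) \<le> spec_norm A * spec_norm B"
proof (rule sn_le)
  show "0 \<le> spec_norm A * spec_norm B" by (simp add: sn_nonneg)
  fix x
  have "norm ((A ** B) *v x) = norm (A *v (B *v x))" by (simp add: matrix_vector_mul_assoc)
  also have "\<dots> \<le> spec_norm A * norm (B *v x)" by (rule sn_app)
  also have "\<dots> \<le> spec_norm A * (spec_norm B * norm x)"
    by (rule mult_left_mono[OF sn_app sn_nonneg])
  finally show "norm ((A ** B) *v x) \<le> spec_norm A * spec_norm B * norm x" by (simp add: mult.assoc)
qed

lemma sn_add: "spec_norm (A + B) \<le> spec_norm A + spec_norm B"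
proof (rule sn_le)
  show "0 \<le> spec_norm A + spec_norm B" by (simp add: sn_nonneg)
  fix x
  have "norm ((A + B) *v x) = norm (A *v x + B *v x)" by (simp add: matrix_vector_mult_add_rdistrib)
  also have "\<dots> \<le> norm (A *v x) + norm (B *v x)" by (rule norm_triangle_ineq)
  also have "\<dots> \<le> spec_norm A * norm x + spec_norm B * norm x" by (intro add_mono sn_app)
  finally show "norm ((A + B) *v x) \<le> (spec_norm A + spec_norm B) * norm x" by (simp add: distrib_right)
qed

lemma sn_transpose: fixes A :: "real^'n^'n" shows "spec_norm (transpose A) \<le> spec_norm A"
proof (rule sn_le[OF sn_nonneg])
  fix x :: "real^'n"
  let ?y = "x v* A"
  have "norm ?y ^ 2 = ?y \<bullet> ?y" by (simp add: power2_norm_eq_inner)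
  also have "\<dots> = x \<bullet> (A *v ?y)" by (rule dot_lmul_matrix)
  also have "\<dots> \<le> norm x * norm (A *v ?y)" by (rule norm_cauchy_schwarz)
  also have "\<dots> \<le> norm x * (spec_norm A * norm ?y)" by (rule mult_left_mono[OF sn_app norm_ge_zero])
  finally have h: "norm ?y * norm ?y \<le> (spec_norm A * norm x) * norm ?y"
    by (simp add: power2_eq_square algebra_simps)
  show "norm (transpose A *v x) \<le> spec_norm A * norm x"
  proof (cases "norm ?y = 0")
    case True then show ?thesis by (simp add: sn_nonneg)
  next
    case False then have "norm ?y > 0" by simp
    with h have "norm ?y \<le> spec_norm A * norm x" by (simp add: mult_le_cancel_right)
    then show ?thesis by simp
  qed
qed

lemma mneg_app: "(- (A::real^'n^'n)) *v x = - (A *v x)"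
  by (simp add: matrix_vector_mult_def vec_eq_iff sum_negf)

lemma sn_neg: "spec_norm (- A) = spec_norm A"
proof -
  have "(\<lambda>x. (- A) *v x) = (\<lambda>x. - (A *v x))" by (simp add: mneg_app)
  then show ?thesis unfolding spec_norm_def using onorm_neg[of "\<lambda>x. A *v x"] by simp
qed

lemma sn_zero: "spec_norm (0::real^'n^'n) = 0"
  by (rule antisym[OF sn_le sn_nonneg]) simp_all

lemma sn_diff: "spec_norm (A - B) \<le> spec_norm A + spec_norm B"
  using sn_add[of A "- B"] by (simp add: sn_neg)

lemma msub_l: "(A::real^'n^'n) ** (B - C) = A ** B - A ** C"
  by (simp add: matrix_eq matrix_vector_mul_assoc[symmetric] matrix_vector_mult_diff_distrib matrix_vector_mult_diff_rdistrib)

lemma msub_r: "((B::real^'n^'n) - C) ** A = B ** A - C ** A"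
  by (simp add: matrix_eq matrix_vector_mul_assoc[symmetric] matrix_vector_mult_diff_rdistrib)

lemma madd_r: "((B::real^'n^'n) + C) ** A = B ** A + C ** A"
  by (simp add: matrix_eq matrix_vector_mul_assoc[symmetric] matrix_vector_mult_add_rdistrib)

lemma sn_sandwich: assumes "spec_norm V \<le> a" shows "spec_norm (V ** D ** transpose V) \<le> a^2 * spec_norm D"
proof -
  have "spec_norm (V ** D ** transpose V) \<le> spec_norm (V ** D) * spec_norm (transpose V)" by (rule sn_mult)
  also have "\<dots> \<le> (spec_norm V * spec_norm D) * spec_norm V"
    by (rule mult_mono[OF sn_mult sn_transpose mult_nonneg_nonneg[OF sn_nonneg sn_nonneg] sn_nonneg])
  also have "\<dots> \<le> (a * spec_norm D) * a"
    using order_trans[OF sn_nonneg assms]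
    by (intro mult_mono[OF mult_right_mono[OF assms sn_nonneg] assms] mult_nonneg_nonneg sn_nonneg)
  finally show ?thesis by (simp add: power2_eq_square algebra_simps)
qed

lemma sn_pow: assumes "spec_norm A \<le> a" shows "spec_norm (mpow A k) \<le> a ^ k"
proof (induction k)
  case 0
  have "spec_norm (mat 1 :: real^'n^'n) \<le> 1"
    by (rule sn_le) (simp_all add: matrix_vector_mul_lid)
  then show ?case by simp
next
  case (Suc k)
  have "spec_norm (mpow A (Suc k)) \<le> spec_norm A * spec_norm (mpow A k)" by (simp add: sn_mult)
  also have "\<dots> \<le> a * a ^ k"
    by (rule mult_mono[OF assms Suc.IH order_trans[OF sn_nonneg assms] sn_nonneg])
  finally show ?case by simp
qed

lemma sn_powdiff:
  assumes "spec_norm A \<le> a" "spec_norm B \<le> a"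
  shows "spec_norm (mpow B (Suc k) - mpow A (Suc k)) \<le> real (Suc k) * a ^ k * spec_norm (B - A)"
proof (induction k)
  case 0 then show ?case by simp
next
  case (Suc k)
  have a0: "0 \<le> a" using order_trans[OF sn_nonneg assms(1)] .
  have eq: "mpow B (Suc (Suc k)) - mpow A (Suc (Suc k))
      = B ** (mpow B (Suc k) - mpow A (Suc k)) + (B - A) ** mpow A (Suc k)"
    by (simp add: msub_l msub_r)
  have "spec_norm (mpow B (Suc (Suc k)) - mpow A (Suc (Suc k)))
      \<le> spec_norm B * spec_norm (mpow B (Suc k) - mpow A (Suc k)) + spec_norm (B - A) * spec_norm (mpow A (Suc k))"
    unfolding eq by (rule order_trans[OF sn_add add_mono[OF sn_mult sn_mult]])
  also have "\<dots> \<le> a * (real (Suc k) * a ^ k * spec_norm (B - A)) + spec_norm (B - A) * a ^ Suc k"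
    by (rule add_mono[OF mult_mono[OF assms(2) Suc.IH a0 sn_nonneg] mult_left_mono[OF sn_pow[OF assms(1)] sn_nonneg]])
  also have "\<dots> = real (Suc (Suc k)) * a ^ Suc k * spec_norm (B - A)" by (simp add: algebra_simps)
  finally show ?case .
qed

lemma pow_shift: "V ** mpow (transpose V ** V) k ** transpose V = mpow (V ** transpose V) (Suc k)"
proof (induction k)
  case 0 then show ?case by simp
next
  case (Suc k)
  have "V ** mpow (transpose V ** V) (Suc k) ** transpose V
     = (V ** transpose V) ** (V ** mpow (transpose V ** V) k ** transpose V)"
    by (simp add: matrix_mul_assoc)
  then show ?case using Suc by simp
qed

theorem lemma5:
  fixes W :: "nat \<Rightarrow> real^'n^'n" and L :: nat and \<alpha> \<delta> :: real
  assumes "L \<ge> 2" and "\<alpha> \<ge> 0" and "\<delta> \<ge> 0"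
    and "\<And>l. 1 \<le> l \<Longrightarrow> l \<le> L - 1 \<Longrightarrow> spec_norm (W l) \<le> \<alpha>"
    and "\<And>l. 1 \<le> l \<Longrightarrow> l \<le> L - 2 \<Longrightarrow>
           spec_norm (transpose (W (l+1)) ** W (l+1) - W l ** transpose (W l)) \<le> \<delta>"
  shows "spec_norm (mprod W (L-1) ** transpose (mprod W (L-1))
           - mpow (W (L-1) ** transpose (W (L-1))) (L-1))
         \<le> 1/2 * real L ^ 2 * \<alpha> ^ (2*(L-2)) * \<delta>"
proof -
  have main: "Suc m \<le> L - 1 \<Longrightarrow> spec_norm (mprod W (Suc m) ** transpose (mprod W (Suc m))
           - mpow (W (Suc m) ** transpose (W (Suc m))) (Suc m))
         \<le> real (Suc m * m) / 2 * \<alpha> ^ (2*m) * \<delta>" for m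
  proof (induction m)
    case 0 then show ?case by (simp add: sn_zero)
  next
    case (Suc m)
    define V where "V = W (Suc (Suc m))"
    define U where "U = W (Suc m)"
    define P where "P = mprod W (Suc m)"
    define D where "D = P ** transpose P - mpow (U ** transpose U) (Suc m)"
    have hD: "spec_norm D \<le> real (Suc m * m) / 2 * \<alpha> ^ (2*m) * \<delta>"
      using Suc by (simp add: D_def P_def U_def)
    have hV: "spec_norm V \<le> \<alpha>" using Suc.prems assms(4) by (simp add: V_def)
    have hU: "spec_norm U \<le> \<alpha>" using Suc.prems assms(4) by (simp add: U_def)
    have hE: "spec_norm (transpose V ** V - U ** transpose U) \<le> \<delta>"
      using Suc.prems assms(5)[of "Suc m"] by (simp add: U_def V_def)
    have n1: "spec_norm (U ** transpose U) \<le> \<alpha>^2"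
      using order_trans[OF sn_mult mult_mono[OF hU order_trans[OF sn_transpose hU] assms(2) sn_nonneg]]
      by (simp add: power2_eq_square)
    have n2: "spec_norm (transpose V ** V) \<le> \<alpha>^2"
      using order_trans[OF sn_mult mult_mono[OF order_trans[OF sn_transpose hV] hV assms(2) sn_nonneg]]
      by (simp add: power2_eq_square)
    have tel: "spec_norm (mpow (U ** transpose U) (Suc m) - mpow (transpose V ** V) (Suc m))
        \<le> real (Suc m) * (\<alpha>^2) ^ m * \<delta>"
    proof -
      have "spec_norm (mpow (U ** transpose U) (Suc m) - mpow (transpose V ** V) (Suc m))
        \<le> real (Suc m) * (\<alpha>^2) ^ m * spec_norm (U ** transpose U - transpose V ** V)"
        by (rule sn_powdiff[OF n2 n1])
      also have "spec_norm (U ** transpose U - transpose V ** V) = spec_norm (transpose V ** V - U ** transpose U)"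
        by (metis minus_diff_eq sn_neg)
      also have "real (Suc m) * (\<alpha>^2)^m * spec_norm (transpose V ** V - U ** transpose U) \<le> real (Suc m) * (\<alpha>^2)^m * \<delta>"
        by (rule mult_left_mono[OF hE]) simp
      finally show ?thesis .
    qed
    have e1: "mprod W (Suc (Suc m)) ** transpose (mprod W (Suc (Suc m))) = V ** (P ** transpose P) ** transpose V"
      by (simp add: V_def P_def matrix_transpose_mul matrix_mul_assoc)
    have e2: "mpow (W (Suc (Suc m)) ** transpose (W (Suc (Suc m)))) (Suc (Suc m)) = V ** mpow (transpose V ** V) (Suc m) ** transpose V"
      unfolding V_def by (rule pow_shift[symmetric])
    have e3: "V ** (P ** transpose P) ** transpose V - V ** mpow (transpose V ** V) (Suc m) ** transpose V
        = V ** D ** transpose V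
          + V ** (mpow (U ** transpose U) (Suc m) - mpow (transpose V ** V) (Suc m)) ** transpose V"
      unfolding D_def msub_l msub_r by simp
    have eq: "mprod W (Suc (Suc m)) ** transpose (mprod W (Suc (Suc m)))
           - mpow (W (Suc (Suc m)) ** transpose (W (Suc (Suc m)))) (Suc (Suc m))
        = V ** D ** transpose V
          + V ** (mpow (U ** transpose U) (Suc m) - mpow (transpose V ** V) (Suc m)) ** transpose V"
      unfolding e1 e2 e3 ..
    have p1: "(\<alpha>^2)^m = \<alpha>^(2*m)" by (simp add: power_mult)
    have p2: "\<alpha>^(2*Suc m) = \<alpha>^2*\<alpha>^(2*m)" by (simp add: power_add[symmetric])
    have "spec_norm (V ** D ** transpose V
          + V ** (mpow (U ** transpose U) (Suc m) - mpow (transpose V ** V) (Suc m)) ** transpose V)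
        \<le> \<alpha>^2 * (real (Suc m * m) / 2 * \<alpha> ^ (2*m) * \<delta>) + \<alpha>^2 * (real (Suc m) * (\<alpha>^2) ^ m * \<delta>)"
      by (rule order_trans[OF sn_add add_mono[OF order_trans[OF sn_sandwich[OF hV] mult_left_mono[OF hD]]
            order_trans[OF sn_sandwich[OF hV] mult_left_mono[OF tel]]]]) simp_all
    also have "\<dots> = real (Suc (Suc m) * Suc m) / 2 * \<alpha> ^ (2 * Suc m) * \<delta>"
      unfolding p1 p2 by (simp add: field_simps)
    finally show ?case unfolding eq .
  qed
  obtain m where m: "L - 1 = Suc m" using assms(1) by (cases "L - 1") auto
  have "L - 2 = m" using m by simp
  have "real (Suc m * m) / 2 \<le> 1/2 * real L ^ 2"
  proof -
    have "Suc m * m \<le> L * L" using m by (intro mult_le_mono) auto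
    then have "real (Suc m * m) \<le> real (L * L)" by (simp only: of_nat_le_iff)
    then show ?thesis by (simp add: power2_eq_square)
  qed
  then have "real (Suc m * m) / 2 * \<alpha> ^ (2*m) \<le> 1/2 * real L ^ 2 * \<alpha> ^ (2*m)"
    by (rule mult_right_mono) (simp add: assms(2))
  then have "real (Suc m * m) / 2 * \<alpha> ^ (2*m) * \<delta> \<le> 1/2 * real L ^ 2 * \<alpha> ^ (2*m) * \<delta>"
    by (rule mult_right_mono) (rule assms(3))
  then have fin: "real (Suc m * m) / 2 * \<alpha> ^ (2*m) * \<delta> \<le> 1/2 * real L ^ 2 * \<alpha> ^ (2*(L-2)) * \<delta>"
    by (simp only: \<open>L - 2 = m\<close>)
  have "spec_norm (mprod W (L-1) ** transpose (mprod W (L-1))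
           - mpow (W (L-1) ** transpose (W (L-1))) (L-1)) \<le> real (Suc m * m) / 2 * \<alpha> ^ (2*m) * \<delta>"
    unfolding m by (rule main) (use m in arith)
  then show ?thesis using fin by (rule order_trans)
qed

end
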